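(* Let $\Lambda$ be a well-founded semilattice. Then every nonprincipal strongly productive ultrafilter on $\Lambda$ is regular.
   Context: A semilattice is a commutative semigroup in which every element is idempotent, ordered by $x\le y$ iff $xy=x$; it is well-founded if every nonempty subset has a minimal element. For a sequence $\vec{x}=(x_n)_{n\in\omega}$, $\mathrm{FP}(\vec{x})$ is the set of all products $\prod_{i\in a}x_i$ with $a$ a finite nonempty subset of $\omega$, and $\mathrm{FP}_1(\vec{x})=\mathrm{FP}((x_{n+1})_n)$. An ultrafilter $q$ is strongly productive if every $A\in q$ contains some $\mathrm{FP}(\vec{x})\in q$. A nonprincipal strongly productive ultrafilter $q$ is regular if there is $B\in q$ such that for every sequence $\vec{x}$ with $\mathrm{FP}(\vec{x})\subseteq B$, the set $x_0\mathrm{FP}_1(\vec{x})$ does not belong to $q$. *)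

theory Defs
  imports Main
begin

text \<open>A semilattice (commutative idempotent semigroup) is modelled by the type class
  semilattice_inf: the product is inf, and x \<le> y iff inf x y = x (lemma le_iff_inf).\<close>

definition well_founded_sl :: "'a::semilattice_inf itself \<Rightarrow> bool" where
  "well_founded_sl _ \<longleftrightarrow>
     (\<forall>S::'a set. S \<noteq> {} \<longrightarrow> (\<exists>m\<in>S. \<forall>s\<in>S. s \<le> m \<longrightarrow> s = m))"

definition ultrafilter_on :: "'a set set \<Rightarrow> bool" where
  "ultrafilter_on q \<longleftrightarrow>
     UNIV \<in> q \<and> {} \<notin> q \<and>
     (\<forall>A B. A \<in> q \<longrightarrow> A \<subseteq> B \<longrightarrow> B \<in> q) \<and>
     (\<forall>A B. A \<in> q \<longrightarrow> B \<in> q \<longrightarrow> A \<inter> B \<in> q) \<and>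
     (\<forall>A. A \<in> q \<or> - A \<in> q)"

definition nonprincipal :: "'a set set \<Rightarrow> bool" where
  "nonprincipal q \<longleftrightarrow> (\<forall>x. q \<noteq> {A. x \<in> A})"

definition FP :: "(nat \<Rightarrow> 'a::semilattice_inf) \<Rightarrow> 'a set" where
  "FP x = {Inf_fin (x ` a) | a. finite a \<and> a \<noteq> {}}"

definition FP1 :: "(nat \<Rightarrow> 'a::semilattice_inf) \<Rightarrow> 'a set" where
  "FP1 x = FP (\<lambda>n. x (Suc n))"

definition strongly_productive :: "'a::semilattice_inf set set \<Rightarrow> bool" where
  "strongly_productive q \<longleftrightarrow> (\<forall>A\<in>q. \<exists>x. FP x \<subseteq> A \<and> FP x \<in> q)"

definition regular_uf :: "'a::semilattice_inf set set \<Rightarrow> bool" where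
  "regular_uf q \<longleftrightarrow> nonprincipal q \<and> strongly_productive q \<and>
     (\<exists>B\<in>q. \<forall>x. FP x \<subseteq> B \<longrightarrow> (\<lambda>y. inf (x 0) y) ` FP1 x \<notin> q)"

end

theory Submission
  imports Defs
begin

theorem mainTheorem13:
  fixes q :: "'a::semilattice_inf set set"
  assumes "well_founded_sl TYPE('a)"
    and "ultrafilter_on q"
    and "nonprincipal q"
    and "strongly_productive q"
  shows "regular_uf q"
proof -
  have wf: "\<And>S::'a set. S \<noteq> {} \<Longrightarrow> \<exists>m\<in>S. \<forall>s\<in>S. s \<le> m \<longrightarrow> s = m"
    using assms(1) unfolding well_founded_sl_def by blast
  have up: "\<And>A B. A \<in> q \<Longrightarrow> A \<subseteq> B \<Longrightarrow> B \<in> q"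
   and int: "\<And>A B. A \<in> q \<Longrightarrow> B \<in> q \<Longrightarrow> A \<inter> B \<in> q"
   and emp: "{} \<notin> q" and compl: "\<And>A. A \<in> q \<or> - A \<in> q"
    using assms(2) unfolding ultrafilter_on_def by blast+
  have nosing: "{c} \<notin> q" for c
  proof
    assume c: "{c} \<in> q"
    have "q = {A. c \<in> A}"
    proof (intro set_eqI iffI)
      fix A assume "A \<in> q"
      show "A \<in> {A. c \<in> A}"
      proof (rule ccontr)
        assume "A \<notin> {A. c \<in> A}"
        then have "A \<inter> {c} = {}" by auto
        with int[OF \<open>A \<in> q\<close> c] emp show False by simp
      qed
    next
      fix A assume "A \<in> {A. c \<in> A}"
      then show "A \<in> q" using up[OF c] by auto
    qed
    with assms(3) show False unfolding nonprincipal_def by blast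
  qed
  define B where "B = {a::'a. {b. b \<le> a} \<notin> q}"
  have Bq: "B \<in> q"
  proof (rule ccontr)
    assume "B \<notin> q"
    then have Cq: "-B \<in> q" using compl by blast
    then have "-B \<noteq> {}" using emp by auto
    from wf[OF this] obtain c where c: "c \<in> -B" and mn: "\<forall>s\<in>-B. s \<le> c \<longrightarrow> s = c"
      by (elim bexE)
    have dc: "{b. b \<le> c} \<in> q" using c unfolding B_def by auto
    have "-B \<inter> {b. b \<le> c} \<subseteq> {c}" using mn by auto
    then have "{c} \<in> q" using up[OF int[OF Cq dc]] by blast
    with nosing show False by blast
  qed
  have "\<forall>x. FP x \<subseteq> B \<longrightarrow> (\<lambda>y. inf (x 0) y) ` FP1 x \<notin> q"
  proof (intro allI impI)
    fix x :: "nat \<Rightarrow> 'a" assume "FP x \<subseteq> B"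
    moreover have "x 0 \<in> FP x" unfolding FP_def
      by (rule CollectI, rule exI[of _ "{0}"]) auto
    ultimately have "x 0 \<in> B" by blast
    then have nq: "{b. b \<le> x 0} \<notin> q" unfolding B_def by simp
    show "(\<lambda>y. inf (x 0) y) ` FP1 x \<notin> q"
    proof
      assume "(\<lambda>y. inf (x 0) y) ` FP1 x \<in> q"
      moreover have "(\<lambda>y. inf (x 0) y) ` FP1 x \<subseteq> {b. b \<le> x 0}" by auto
      ultimately show False using up nq by blast
    qed
  qed
  then show ?thesis using Bq assms(3,4) unfolding regular_uf_def by blast
qed

end
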